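(* For the Lr $(\mathbf a,\tau)$ interval exchange transformation $T$ and its dual $\tilde T$ (with no further hypotheses), the associated subshift satisfies $X=\mathcal I([0,1))\cup\tilde{\mathcal I}((0,1])$.
   Context: Fix $n\ge 2$, $[n]=\{1,\dots,n\}$, a vector $\mathbf a=(a_1,\dots,a_n)$ with all $a_i>0$ and $\sum_i a_i=1$, and a permutation $\tau$ of $[n]$. Put $b_0=0$, $b_i=\sum_{j=1}^i a_j$, $J_i=[b_{i-1},b_i)$, $\tilde J_i=(b_{i-1},b_i]$, $D=\{b_1,\dots,b_{n-1}\}$, $b^\tau_0=0$, $b^\tau_i=\sum_{j=1}^i a_{\tau^{-1}(j)}$. $T:[0,1)\to[0,1)$ and $\tilde T:(0,1]\to(0,1]$ are defined by $x\mapsto x-b_{i-1}+b^\tau_{\tau(i)-1}$ for $x\in J_i$ (resp. $x\in\tilde J_i$); both are bijections. $\Omega=[n]^{\mathbb Z}$ with the product topology. The itinerary maps are $\mathcal I(x)_k=i\iff T^kx\in J_i$ and $\tilde{\mathcal I}(x)_k=i\iff\tilde T^kx\in\tilde J_i$ ($k\in\mathbb Z$). $D_\infty=\{0,1\}\cup\bigcup_{k\in\mathbb Z}T^k(D)$, $R=[0,1]\setminus D_\infty$, $X_0=\mathcal I(R)$, $X=\overline{X_0}$ (closure in $\Omega$). *)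

theory Defs
  imports "HOL-Analysis.Analysis" "HOL-Combinatorics.Permutations"
begin

text \<open>Omega = [n]^Z is rendered as the subspace of int => nat (product topology, nat discrete);
  [n]^Z is closed in nat^Z, so closures agree.\<close>

definition iet_b :: "(nat \<Rightarrow> real) \<Rightarrow> nat \<Rightarrow> real" where
  "iet_b a i = (\<Sum>j\<in>{1..i}. a j)"

definition iet_btau :: "nat \<Rightarrow> (nat \<Rightarrow> real) \<Rightarrow> (nat \<Rightarrow> nat) \<Rightarrow> nat \<Rightarrow> real" where
  "iet_btau n a \<tau> i = (\<Sum>j\<in>{1..i}. a (inv_into {1..n} \<tau> j))"

definition iet_J :: "(nat \<Rightarrow> real) \<Rightarrow> nat \<Rightarrow> real set" where
  "iet_J a i = {iet_b a (i - 1) ..< iet_b a i}"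

definition iet_Jt :: "(nat \<Rightarrow> real) \<Rightarrow> nat \<Rightarrow> real set" where
  "iet_Jt a i = {iet_b a (i - 1) <.. iet_b a i}"

definition iet_D :: "nat \<Rightarrow> (nat \<Rightarrow> real) \<Rightarrow> real set" where
  "iet_D n a = iet_b a ` {1..n-1}"

definition iet_T :: "nat \<Rightarrow> (nat \<Rightarrow> real) \<Rightarrow> (nat \<Rightarrow> nat) \<Rightarrow> real \<Rightarrow> real" where
  "iet_T n a \<tau> x = (let i = (THE i. i \<in> {1..n} \<and> x \<in> iet_J a i)
     in x - iet_b a (i - 1) + iet_btau n a \<tau> (\<tau> i - 1))"

definition iet_Tt :: "nat \<Rightarrow> (nat \<Rightarrow> real) \<Rightarrow> (nat \<Rightarrow> nat) \<Rightarrow> real \<Rightarrow> real" where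
  "iet_Tt n a \<tau> x = (let i = (THE i. i \<in> {1..n} \<and> x \<in> iet_Jt a i)
     in x - iet_b a (i - 1) + iet_btau n a \<tau> (\<tau> i - 1))"

definition zpow :: "real set \<Rightarrow> (real \<Rightarrow> real) \<Rightarrow> int \<Rightarrow> real \<Rightarrow> real" where
  "zpow S f k x = (if 0 \<le> k then (f ^^ nat k) x else (inv_into S f ^^ nat (- k)) x)"

definition iet_Tpow :: "nat \<Rightarrow> (nat \<Rightarrow> real) \<Rightarrow> (nat \<Rightarrow> nat) \<Rightarrow> int \<Rightarrow> real \<Rightarrow> real" where
  "iet_Tpow n a \<tau> k = zpow {0..<1} (iet_T n a \<tau>) k"

definition iet_Ttpow :: "nat \<Rightarrow> (nat \<Rightarrow> real) \<Rightarrow> (nat \<Rightarrow> nat) \<Rightarrow> int \<Rightarrow> real \<Rightarrow> real" where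
  "iet_Ttpow n a \<tau> k = zpow {0<..1} (iet_Tt n a \<tau>) k"

definition iet_itin :: "nat \<Rightarrow> (nat \<Rightarrow> real) \<Rightarrow> (nat \<Rightarrow> nat) \<Rightarrow> real \<Rightarrow> int \<Rightarrow> nat" where
  "iet_itin n a \<tau> x k = (THE i. i \<in> {1..n} \<and> iet_Tpow n a \<tau> k x \<in> iet_J a i)"

definition iet_itint :: "nat \<Rightarrow> (nat \<Rightarrow> real) \<Rightarrow> (nat \<Rightarrow> nat) \<Rightarrow> real \<Rightarrow> int \<Rightarrow> nat" where
  "iet_itint n a \<tau> x k = (THE i. i \<in> {1..n} \<and> iet_Ttpow n a \<tau> k x \<in> iet_Jt a i)"

definition iet_Dinf :: "nat \<Rightarrow> (nat \<Rightarrow> real) \<Rightarrow> (nat \<Rightarrow> nat) \<Rightarrow> real set" where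
  "iet_Dinf n a \<tau> = {0, 1} \<union> (\<Union>k::int. iet_Tpow n a \<tau> k ` iet_D n a)"

definition iet_R :: "nat \<Rightarrow> (nat \<Rightarrow> real) \<Rightarrow> (nat \<Rightarrow> nat) \<Rightarrow> real set" where
  "iet_R n a \<tau> = {0..1} - iet_Dinf n a \<tau>"

definition iet_X :: "nat \<Rightarrow> (nat \<Rightarrow> real) \<Rightarrow> (nat \<Rightarrow> nat) \<Rightarrow> (int \<Rightarrow> nat) set" where
  "iet_X n a \<tau> = closure (iet_itin n a \<tau> ` iet_R n a \<tau>)"

end

theory Submission
  imports Defs
begin


lemma funpow_in: "f ` S \<subseteq> S \<Longrightarrow> x \<in> S \<Longrightarrow> (f ^^ m) x \<in> S"
  by (induction m) auto

lemma bij_inv_sub: "bij_betw f S S \<Longrightarrow> inv_into S f ` S \<subseteq> S"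
  using bij_betw_imp_surj_on bij_betw_inv_into by blast
lemma bij_sub: "bij_betw f S S \<Longrightarrow> f ` S \<subseteq> S"
  using bij_betw_imp_surj_on by blast
lemma bij_f_inv: "bij_betw f S S \<Longrightarrow> y \<in> S \<Longrightarrow> f (inv_into S f y) = y"
  by (simp add: bij_betw_imp_surj_on f_inv_into_f)
lemma bij_inv_f: "bij_betw f S S \<Longrightarrow> y \<in> S \<Longrightarrow> inv_into S f (f y) = y"
  by (simp add: bij_betw_def inv_into_f_f)

lemma zpow_in:
  assumes "bij_betw f S S" "x \<in> S" shows "zpow S f k x \<in> S"
  using funpow_in[OF bij_sub[OF assms(1)] assms(2)] funpow_in[OF bij_inv_sub[OF assms(1)] assms(2)]
  by (simp add: zpow_def)

lemma zpow_succ: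
  assumes "bij_betw f S S" "x \<in> S" shows "zpow S f (k+1) x = f (zpow S f k x)"
proof (cases "0 \<le> k")
  case True
  then have "nat (k+1) = Suc (nat k)" by simp
  then show ?thesis using True unfolding zpow_def by simp
next
  case False
  define m where "m = nat (-k) - 1"
  have k: "nat (-k) = Suc m" using False m_def by simp
  have k2: "nat (-(k+1)) = m" using False m_def by simp
  have inS: "(inv_into S f ^^ m) x \<in> S" using funpow_in[OF bij_inv_sub[OF assms(1)] assms(2)] .
  have e1: "zpow S f (k+1) x = (inv_into S f ^^ m) x"
    using False k2 unfolding zpow_def by (cases "k = -1") auto
  have e2: "zpow S f k x = inv_into S f ((inv_into S f ^^ m) x)"
    using False k unfolding zpow_def by simp
  show ?thesis unfolding e1 e2 using bij_f_inv[OF assms(1) inS] by simp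
qed

lemma zpow_pred:
  assumes "bij_betw f S S" "x \<in> S" shows "zpow S f (k-1) x = inv_into S f (zpow S f k x)"
proof -
  have "zpow S f k x = f (zpow S f (k-1) x)" using zpow_succ[OF assms, of "k-1"] by simp
  moreover have "zpow S f (k-1) x \<in> S" using zpow_in assms by blast
  ultimately show ?thesis using bij_inv_f[OF assms(1)] by simp
qed

lemma zpow_0: "zpow S f 0 x = x" by (simp add: zpow_def)

lemma zpow_add:
  assumes "bij_betw f S S" "x \<in> S" shows "zpow S f j (zpow S f k x) = zpow S f (j+k) x"
proof (induction j rule: int_induct[where k=0])
  case base then show ?case by (simp add: zpow_0)
next
  case (step1 i)
  have "zpow S f (i+1) (zpow S f k x) = f (zpow S f i (zpow S f k x))"
    using zpow_succ[OF assms(1) zpow_in[OF assms]] .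
  also have "\<dots> = f (zpow S f (i+k) x)" using step1 by simp
  also have "\<dots> = zpow S f (i+k+1) x" using zpow_succ[OF assms, of "i+k"] by simp
  finally show ?case by (simp add: algebra_simps)
next
  case (step2 i)
  have "zpow S f (i-1) (zpow S f k x) = inv_into S f (zpow S f i (zpow S f k x))"
    using zpow_pred[OF assms(1) zpow_in[OF assms]] .
  also have "\<dots> = inv_into S f (zpow S f (i+k) x)" using step2 by simp
  also have "\<dots> = zpow S f (i+k-1) x" using zpow_pred[OF assms, of "i+k"] by simp
  finally show ?case by (simp add: algebra_simps)
qed

definition near :: "bool \<Rightarrow> real \<Rightarrow> real \<Rightarrow> real \<Rightarrow> bool" where
  "near d z \<delta> w = (if d then z \<le> w \<and> w < z + \<delta> else z - \<delta> < w \<and> w \<le> z)"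

lemma near_shift: "near d (z + c) \<delta> (w + c) = near d z \<delta> w"
  by (auto simp: near_def)
lemma near_shift': "near d u \<delta> (u + (w - z)) = near d z \<delta> w"
  by (auto simp: near_def)
lemma near_mono: "near d z \<delta> w \<Longrightarrow> \<delta> \<le> \<delta>' \<Longrightarrow> near d z \<delta>' w"
  by (auto simp: near_def split: if_splits)
lemma near_refl: "\<delta> > 0 \<Longrightarrow> near d z \<delta> z"
  by (auto simp: near_def)

definition LT :: "bool \<Rightarrow> real set \<Rightarrow> (real \<Rightarrow> real) \<Rightarrow> bool" where
  "LT d S f = (\<forall>z\<in>S. \<exists>\<delta>>0. \<forall>w. near d z \<delta> w \<longrightarrow> w \<in> S \<and> f w = f z + (w - z))"

lemma LT_inv:
  assumes b: "bij_betw f S S" and L: "LT d S f" shows "LT d S (inv_into S f)"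
  unfolding LT_def
proof
  fix z assume z: "z \<in> S"
  define u where "u = inv_into S f z"
  have u1: "u \<in> S" using bij_inv_sub[OF b] z u_def by blast
  have u2: "f u = z" using bij_f_inv[OF b z] u_def by simp
  note u = u1 u2
  obtain \<delta> where d: "\<delta> > 0" "\<forall>w. near d u \<delta> w \<longrightarrow> w \<in> S \<and> f w = f u + (w - u)"
    using L u unfolding LT_def by blast
  have "\<forall>w. near d z \<delta> w \<longrightarrow> w \<in> S \<and> inv_into S f w = inv_into S f z + (w - z)"
  proof (intro allI impI)
    fix w assume w: "near d z \<delta> w"
    have nu: "near d u \<delta> (u + (w - z))" using w by (simp add: near_shift')
    have A1: "u + (w - z) \<in> S" using d(2) nu by blast
    have "f (u + (w - z)) = f u + (u + (w - z) - u)" using d(2) nu by blast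
    then have A2: "f (u + (w - z)) = w" using u2 by simp
    note A = A1 A2
    have "f (u + (w - z)) \<in> S" using bij_sub[OF b] A1 by blast
    then have "w \<in> S" using A2 by simp
    moreover have "inv_into S f w = u + (w - z)"
      using A bij_inv_f[OF b A(1)] by simp
    ultimately show "w \<in> S \<and> inv_into S f w = inv_into S f z + (w - z)" using u_def by simp
  qed
  then show "\<exists>\<delta>>0. \<forall>w. near d z \<delta> w \<longrightarrow> w \<in> S \<and> inv_into S f w = inv_into S f z + (w - z)"
    using d(1) by blast
qed

lemma LT_comp:
  assumes "LT d S g" "LT d S h" "h ` S \<subseteq> S" "\<And>x. x \<in> S \<Longrightarrow> F x = g (h x)"
  shows "LT d S F"
  unfolding LT_def
proof
  fix z assume z: "z \<in> S"
  obtain \<delta>1 where d1: "\<delta>1 > 0" "\<forall>w. near d z \<delta>1 w \<longrightarrow> w \<in> S \<and> h w = h z + (w - z)"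
    using assms(2) z unfolding LT_def by blast
  have hz: "h z \<in> S" using assms(3) z by blast
  obtain \<delta>2 where d2: "\<delta>2 > 0" "\<forall>w. near d (h z) \<delta>2 w \<longrightarrow> w \<in> S \<and> g w = g (h z) + (w - h z)"
    using assms(1) hz unfolding LT_def by blast
  have "\<forall>w. near d z (min \<delta>1 \<delta>2) w \<longrightarrow> w \<in> S \<and> F w = F z + (w - z)"
  proof (intro allI impI)
    fix w assume w: "near d z (min \<delta>1 \<delta>2) w"
    then have w1: "near d z \<delta>1 w" and w2: "near d z \<delta>2 w" using near_mono by fastforce+
    have S: "w \<in> S" and hw: "h w = h z + (w - z)" using d1 w1 by auto
    have "near d (h z) \<delta>2 (h z + (w - z))" using w2 by (simp add: near_shift')
    then have "g (h w) = g (h z) + (w - z)" using d2 hw by auto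
    then show "w \<in> S \<and> F w = F z + (w - z)" using S z assms(4) by simp
  qed
  then show "\<exists>\<delta>>0. \<forall>w. near d z \<delta> w \<longrightarrow> w \<in> S \<and> F w = F z + (w - z)"
    using d1(1) d2(1) by (metis min_less_iff_conj)
qed

lemma LT_zpow:
  assumes b: "bij_betw f S S" and L: "LT d S f" shows "LT d S (zpow S f k)"
proof (induction k rule: int_induct[where k=0])
  case base
  show ?case unfolding LT_def zpow_0
  proof
    fix z assume "z \<in> S"
    then obtain \<delta> where "\<delta> > 0" "\<forall>w. near d z \<delta> w \<longrightarrow> w \<in> S \<and> f w = f z + (w - z)"
      using L unfolding LT_def by blast
    then show "\<exists>\<delta>>0. \<forall>w. near d z \<delta> w \<longrightarrow> w \<in> S \<and> w = z + (w - z)" by auto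
  qed
next
  case (step1 i)
  show ?case
    by (rule LT_comp[OF L step1(2)]) (auto simp: zpow_in[OF b] zpow_succ[OF b])
next
  case (step2 i)
  show ?case
    by (rule LT_comp[OF LT_inv[OF b L] step2(2)]) (auto simp: zpow_in[OF b] zpow_pred[OF b])
qed

lemma near_finite:
  assumes "finite I" "\<And>i. i \<in> I \<Longrightarrow> \<exists>\<delta>>0. \<forall>w. near d z \<delta> w \<longrightarrow> P i w"
  shows "\<exists>\<delta>>0. \<forall>w. near d z \<delta> w \<longrightarrow> (\<forall>i\<in>I. P i w)"
  using assms
proof (induction I rule: finite_induct)
  case empty then show ?case by (auto intro: exI[of _ 1])
next
  case (insert x F)
  obtain \<delta>1 where 1: "\<delta>1 > 0" "\<forall>w. near d z \<delta>1 w \<longrightarrow> (\<forall>i\<in>F. P i w)" using insert by blast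
  obtain \<delta>2 where 2: "\<delta>2 > 0" "\<forall>w. near d z \<delta>2 w \<longrightarrow> P x w" using insert by blast
  have "\<forall>w. near d z (min \<delta>1 \<delta>2) w \<longrightarrow> (\<forall>i\<in>insert x F. P i w)"
    using 1 2 near_mono by (metis insert_iff min.cobounded1 min.cobounded2)
  then show ?case using 1 2 by (metis min_less_iff_conj)
qed



lemma b_0: "iet_b c 0 = 0" by (simp add: iet_b_def)
lemma b_Suc: "iet_b c (Suc i) = iet_b c i + c (Suc i)"
  by (simp add: iet_b_def)
lemma b_diff: "1 \<le> i \<Longrightarrow> iet_b c i = iet_b c (i - 1) + c i"
  using b_Suc[of c "i - 1"] by simp

locale part =
  fixes n :: nat and c :: "nat \<Rightarrow> real"
  assumes pos: "\<And>i. i \<in> {1..n} \<Longrightarrow> c i > 0"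
    and tot: "iet_b c n = 1"
begin

lemma mono: "i \<le> j \<Longrightarrow> j \<le> n \<Longrightarrow> iet_b c i \<le> iet_b c j"
proof (induction j)
  case 0 then show ?case by simp
next
  case (Suc j)
  show ?case
  proof (cases "i = Suc j")
    case True then show ?thesis by simp
  next
    case False
    then have "iet_b c i \<le> iet_b c j" using Suc by simp
    moreover have "c (Suc j) > 0" using pos Suc.prems by simp
    ultimately show ?thesis by (simp add: b_Suc)
  qed
qed

lemma strict: "i < j \<Longrightarrow> j \<le> n \<Longrightarrow> iet_b c i < iet_b c j"
proof -
  assume a: "i < j" "j \<le> n"
  have "iet_b c i \<le> iet_b c (j - 1)" using a mono by simp
  moreover have "c j > 0" using pos a by simp
  ultimately show ?thesis using b_diff[of j c] a by simp
qed

lemma nonneg: "i \<le> n \<Longrightarrow> 0 \<le> iet_b c i"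
  using mono[of 0 i] by (simp add: b_0)
lemma le1: "i \<le> n \<Longrightarrow> iet_b c i \<le> 1"
  using mono[of i n] tot by simp

lemma ex_R_aux: "m \<le> n \<Longrightarrow> 0 \<le> z \<Longrightarrow> z < iet_b c m \<Longrightarrow> \<exists>i\<in>{1..m}. iet_b c (i - 1) \<le> z \<and> z < iet_b c i"
proof (induction m)
  case 0 then show ?case by (simp add: b_0)
next
  case (Suc m)
  show ?case
  proof (cases "z < iet_b c m")
    case True then show ?thesis using Suc by force
  next
    case False then show ?thesis using Suc.prems by force
  qed
qed

lemma ex_L_aux: "m \<le> n \<Longrightarrow> 0 < z \<Longrightarrow> z \<le> iet_b c m \<Longrightarrow> \<exists>i\<in>{1..m}. iet_b c (i - 1) < z \<and> z \<le> iet_b c i"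
proof (induction m)
  case 0 then show ?case by (simp add: b_0)
next
  case (Suc m)
  show ?case
  proof (cases "z \<le> iet_b c m")
    case True then show ?thesis using Suc by force
  next
    case False then show ?thesis using Suc.prems by force
  qed
qed

lemma ex_R: "0 \<le> z \<Longrightarrow> z < 1 \<Longrightarrow> \<exists>i\<in>{1..n}. iet_b c (i - 1) \<le> z \<and> z < iet_b c i"
  using ex_R_aux[of n z] tot by simp
lemma ex_L: "0 < z \<Longrightarrow> z \<le> 1 \<Longrightarrow> \<exists>i\<in>{1..n}. iet_b c (i - 1) < z \<and> z \<le> iet_b c i"
  using ex_L_aux[of n z] tot by simp

lemma uniq_R: "i \<in> {1..n} \<Longrightarrow> j \<in> {1..n} \<Longrightarrow> iet_b c (i - 1) \<le> z \<Longrightarrow> z < iet_b c i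
  \<Longrightarrow> iet_b c (j - 1) \<le> z \<Longrightarrow> z < iet_b c j \<Longrightarrow> i = j"
proof -
  assume a: "i \<in> {1..n}" "j \<in> {1..n}" "iet_b c (i - 1) \<le> z" "z < iet_b c i"
     "iet_b c (j - 1) \<le> z" "z < iet_b c j"
  have "\<not> i < j"
  proof
    assume "i < j"
    then have "iet_b c i \<le> iet_b c (j - 1)" using a by (intro mono) auto
    then show False using a by linarith
  qed
  moreover have "\<not> j < i"
  proof
    assume "j < i"
    then have "iet_b c j \<le> iet_b c (i - 1)" using a by (intro mono) auto
    then show False using a by linarith
  qed
  ultimately show "i = j" by simp
qed

lemma uniq_L: "i \<in> {1..n} \<Longrightarrow> j \<in> {1..n} \<Longrightarrow> iet_b c (i - 1) < z \<Longrightarrow> z \<le> iet_b c i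
  \<Longrightarrow> iet_b c (j - 1) < z \<Longrightarrow> z \<le> iet_b c j \<Longrightarrow> i = j"
proof -
  assume a: "i \<in> {1..n}" "j \<in> {1..n}" "iet_b c (i - 1) < z" "z \<le> iet_b c i"
     "iet_b c (j - 1) < z" "z \<le> iet_b c j"
  have "\<not> i < j"
  proof
    assume "i < j"
    then have "iet_b c i \<le> iet_b c (j - 1)" using a by (intro mono) auto
    then show False using a by linarith
  qed
  moreover have "\<not> j < i"
  proof
    assume "j < i"
    then have "iet_b c j \<le> iet_b c (i - 1)" using a by (intro mono) auto
    then show False using a by linarith
  qed
  ultimately show "i = j" by simp
qed

end



locale iet =
  fixes n :: nat and a :: "nat \<Rightarrow> real" and \<tau> :: "nat \<Rightarrow> nat"
  assumes apos: "\<And>i. i \<in> {1..n} \<Longrightarrow> a i > 0"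
    and asum: "(\<Sum>i\<in>{1..n}. a i) = 1"
    and perm: "\<tau> permutes {1..n}"
begin

definition ct where "ct j = a (inv_into {1..n} \<tau> j)"

lemma bij_tau: "bij_betw \<tau> {1..n} {1..n}" using perm permutes_imp_bij by blast
lemma bij_invtau: "bij_betw (inv_into {1..n} \<tau>) {1..n} {1..n}" using bij_betw_inv_into[OF bij_tau] .
lemma tau_in: "i \<in> {1..n} \<Longrightarrow> \<tau> i \<in> {1..n}" using bij_tau bij_betwE by blast
lemma invtau_in: "j \<in> {1..n} \<Longrightarrow> inv_into {1..n} \<tau> j \<in> {1..n}" using bij_invtau bij_betwE by blast
lemma invtau_tau: "i \<in> {1..n} \<Longrightarrow> inv_into {1..n} \<tau> (\<tau> i) = i"
  using bij_tau by (simp add: bij_betw_def inv_into_f_f)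
lemma tau_invtau: "j \<in> {1..n} \<Longrightarrow> \<tau> (inv_into {1..n} \<tau> j) = j"
  using bij_tau by (simp add: bij_betw_imp_surj_on f_inv_into_f)
lemma ct_tau: "i \<in> {1..n} \<Longrightarrow> ct (\<tau> i) = a i" unfolding ct_def by (simp only: invtau_tau)

lemma btau_eq: "iet_btau n a \<tau> = iet_b ct"
  by (rule ext) (simp add: iet_btau_def iet_b_def ct_def)

lemma partA: "part n a"
  by standard (use apos asum in \<open>auto simp: iet_b_def\<close>)

lemma partC: "part n ct"
proof
  show "\<And>i. i \<in> {1..n} \<Longrightarrow> 0 < ct i" using apos invtau_in by (simp add: ct_def)
  have "iet_b ct n = (\<Sum>j\<in>{1..n}. a (inv_into {1..n} \<tau> j))" by (simp add: iet_b_def ct_def)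
  also have "\<dots> = (\<Sum>i\<in>{1..n}. a i)" by (rule sum.reindex_bij_betw[OF bij_invtau])
  finally show "iet_b ct n = 1" using asum by simp
qed

interpretation A: part n a by (rule partA)
interpretation C: part n ct by (rule partC)

abbreviation "b \<equiv> iet_b a"
abbreviation "bt \<equiv> iet_b ct"

lemma bt_tau: "i \<in> {1..n} \<Longrightarrow> bt (\<tau> i) = bt (\<tau> i - 1) + a i"
  using b_diff[of "\<tau> i" ct] tau_in[of i] ct_tau[of i] by simp

lemma T_eq: assumes "i \<in> {1..n}" "b (i - 1) \<le> x" "x < b i"
  shows "iet_T n a \<tau> x = x - b (i - 1) + bt (\<tau> i - 1)"
proof -
  have "(THE i. i \<in> {1..n} \<and> x \<in> iet_J a i) = i"
  proof (rule the_equality)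
    show "i \<in> {1..n} \<and> x \<in> iet_J a i" using assms by (simp add: iet_J_def)
    show "\<And>j. j \<in> {1..n} \<and> x \<in> iet_J a j \<Longrightarrow> j = i"
      using A.uniq_R assms by (auto simp: iet_J_def)
  qed
  then show ?thesis by (simp add: iet_T_def btau_eq Let_def)
qed

lemma Tt_eq: assumes "i \<in> {1..n}" "b (i - 1) < x" "x \<le> b i"
  shows "iet_Tt n a \<tau> x = x - b (i - 1) + bt (\<tau> i - 1)"
proof -
  have "(THE i. i \<in> {1..n} \<and> x \<in> iet_Jt a i) = i"
  proof (rule the_equality)
    show "i \<in> {1..n} \<and> x \<in> iet_Jt a i" using assms by (simp add: iet_Jt_def)
    show "\<And>j. j \<in> {1..n} \<and> x \<in> iet_Jt a j \<Longrightarrow> j = i"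
      using A.uniq_L assms by (auto simp: iet_Jt_def)
  qed
  then show ?thesis by (simp add: iet_Tt_def btau_eq Let_def)
qed

lemma T_bij: "bij_betw (iet_T n a \<tau>) {0..<1} {0..<1}"
proof -
  have img: "iet_T n a \<tau> x \<in> {0..<1} \<and> bt (\<tau> i - 1) \<le> iet_T n a \<tau> x \<and> iet_T n a \<tau> x < bt (\<tau> i)"
    if "i \<in> {1..n}" "b (i - 1) \<le> x" "x < b i" for x i
  proof -
    have e: "iet_T n a \<tau> x = x - b (i - 1) + bt (\<tau> i - 1)" using T_eq that .
    have t: "\<tau> i \<in> {1..n}" using tau_in that(1) .
    have "0 \<le> bt (\<tau> i - 1)" "bt (\<tau> i) \<le> 1" using C.nonneg C.le1 t by auto
    moreover have "x - b (i - 1) < a i" using b_diff[of i a] that by simp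
    ultimately show ?thesis using e bt_tau[OF that(1)] that by simp
  qed
  have inj: "inj_on (iet_T n a \<tau>) {0..<1}"
  proof (rule inj_onI)
    fix x y assume x: "x \<in> {0..<1}" and y: "y \<in> {0..<1}" and e: "iet_T n a \<tau> x = iet_T n a \<tau> y"
    obtain i where i: "i \<in> {1..n}" "b (i - 1) \<le> x" "x < b i" using A.ex_R[of x] x by auto
    obtain j where j: "j \<in> {1..n}" "b (j - 1) \<le> y" "y < b j" using A.ex_R[of y] y by auto
    have "\<tau> i = \<tau> j"
      using C.uniq_R[OF tau_in[OF i(1)] tau_in[OF j(1)]] img[OF i] img[OF j] e by auto
    then have "i = j" using invtau_tau i(1) j(1) by metis
    then show "x = y" using e T_eq[OF i] T_eq[OF j] by simp
  qed
  have "iet_T n a \<tau> ` {0..<1} = {0..<1}"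
  proof
    show "iet_T n a \<tau> ` {0..<1} \<subseteq> {0..<1}"
    proof
      fix y assume "y \<in> iet_T n a \<tau> ` {0..<1}"
      then obtain x where x: "x \<in> {0..<1}" "y = iet_T n a \<tau> x" by auto
      obtain i where i: "i \<in> {1..n}" "b (i - 1) \<le> x" "x < b i" using A.ex_R[of x] x by auto
      show "y \<in> {0..<1}" using img[OF i] x(2) by simp
    qed
    show "{0..<1} \<subseteq> iet_T n a \<tau> ` {0..<1}"
    proof
      fix y :: real assume y: "y \<in> {0..<1}"
      obtain m where m: "m \<in> {1..n}" "bt (m - 1) \<le> y" "y < bt m" using C.ex_R[of y] y by auto
      define i where "i = inv_into {1..n} \<tau> m"
      have i: "i \<in> {1..n}" "\<tau> i = m" using invtau_in tau_invtau m(1) i_def by auto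
      define x where "x = y - bt (m - 1) + b (i - 1)"
      have "bt m = bt (m - 1) + a i" using bt_tau[OF i(1)] i(2) by simp
      then have xi: "b (i - 1) \<le> x" "x < b i" using m b_diff[of i a] i x_def by auto
      have "iet_T n a \<tau> x = y" using T_eq[OF i(1) xi] i(2) x_def by simp
      moreover have "x \<in> {0..<1}"
      proof -
        have "0 \<le> b (i - 1)" using i(1) by (intro A.nonneg) auto
        moreover have "b i \<le> 1" using A.le1[of i] i(1) by simp
        ultimately show ?thesis using xi by simp
      qed
      ultimately show "y \<in> iet_T n a \<tau> ` {0..<1}" by (metis image_eqI)
    qed
  qed
  then show ?thesis using inj by (simp add: bij_betw_def)
qed

lemma Tt_bij: "bij_betw (iet_Tt n a \<tau>) {0<..1} {0<..1}"
proof -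
  have img: "iet_Tt n a \<tau> x \<in> {0<..1} \<and> bt (\<tau> i - 1) < iet_Tt n a \<tau> x \<and> iet_Tt n a \<tau> x \<le> bt (\<tau> i)"
    if "i \<in> {1..n}" "b (i - 1) < x" "x \<le> b i" for x i
  proof -
    have e: "iet_Tt n a \<tau> x = x - b (i - 1) + bt (\<tau> i - 1)" using Tt_eq that .
    have t: "\<tau> i \<in> {1..n}" using tau_in that(1) .
    have "0 \<le> bt (\<tau> i - 1)" "bt (\<tau> i) \<le> 1" using C.nonneg C.le1 t by auto
    moreover have "x - b (i - 1) \<le> a i" using b_diff[of i a] that by simp
    ultimately show ?thesis using e bt_tau[OF that(1)] that by simp
  qed
  have inj: "inj_on (iet_Tt n a \<tau>) {0<..1}"
  proof (rule inj_onI)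
    fix x y assume x: "x \<in> {0<..1}" and y: "y \<in> {0<..1}" and e: "iet_Tt n a \<tau> x = iet_Tt n a \<tau> y"
    obtain i where i: "i \<in> {1..n}" "b (i - 1) < x" "x \<le> b i" using A.ex_L[of x] x by auto
    obtain j where j: "j \<in> {1..n}" "b (j - 1) < y" "y \<le> b j" using A.ex_L[of y] y by auto
    have "\<tau> i = \<tau> j"
      using C.uniq_L[OF tau_in[OF i(1)] tau_in[OF j(1)]] img[OF i] img[OF j] e by auto
    then have "i = j" using invtau_tau i(1) j(1) by metis
    then show "x = y" using e Tt_eq[OF i] Tt_eq[OF j] by simp
  qed
  have "iet_Tt n a \<tau> ` {0<..1} = {0<..1}"
  proof
    show "iet_Tt n a \<tau> ` {0<..1} \<subseteq> {0<..1}"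
    proof
      fix y assume "y \<in> iet_Tt n a \<tau> ` {0<..1}"
      then obtain x where x: "x \<in> {0<..1}" "y = iet_Tt n a \<tau> x" by auto
      obtain i where i: "i \<in> {1..n}" "b (i - 1) < x" "x \<le> b i" using A.ex_L[of x] x by auto
      show "y \<in> {0<..1}" using img[OF i] x(2) by simp
    qed
    show "{0<..1} \<subseteq> iet_Tt n a \<tau> ` {0<..1}"
    proof
      fix y :: real assume y: "y \<in> {0<..1}"
      obtain m where m: "m \<in> {1..n}" "bt (m - 1) < y" "y \<le> bt m" using C.ex_L[of y] y by auto
      define i where "i = inv_into {1..n} \<tau> m"
      have i: "i \<in> {1..n}" "\<tau> i = m" using invtau_in tau_invtau m(1) i_def by auto
      define x where "x = y - bt (m - 1) + b (i - 1)"
      have "bt m = bt (m - 1) + a i" using bt_tau[OF i(1)] i(2) by simp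
      then have xi: "b (i - 1) < x" "x \<le> b i" using m b_diff[of i a] i x_def by auto
      have "iet_Tt n a \<tau> x = y" using Tt_eq[OF i(1) xi] i(2) x_def by simp
      moreover have "x \<in> {0<..1}"
      proof -
        have "0 \<le> b (i - 1)" using i(1) by (intro A.nonneg) auto
        moreover have "b i \<le> 1" using A.le1[of i] i(1) by simp
        ultimately show ?thesis using xi by simp
      qed
      ultimately show "y \<in> iet_Tt n a \<tau> ` {0<..1}" by (metis image_eqI)
    qed
  qed
  then show ?thesis using inj by (simp add: bij_betw_def)
qed

lemma T_LT: "LT True {0..<1} (iet_T n a \<tau>)"
  unfolding LT_def
proof
  fix z :: real assume z: "z \<in> {0..<1}"
  obtain i where i: "i \<in> {1..n}" "b (i - 1) \<le> z" "z < b i" using A.ex_R[of z] z by auto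
  have "\<forall>w. near True z (b i - z) w \<longrightarrow> w \<in> {0..<1} \<and> iet_T n a \<tau> w = iet_T n a \<tau> z + (w - z)"
  proof (intro allI impI)
    fix w assume w: "near True z (b i - z) w"
    then have wi: "b (i - 1) \<le> w" "w < b i" using i by (auto simp: near_def)
    have "b i \<le> 1" using A.le1 i(1) by simp
    then have "w \<in> {0..<1}" using w z by (auto simp: near_def)
    moreover have "iet_T n a \<tau> w = iet_T n a \<tau> z + (w - z)"
      using T_eq[OF i(1) wi] T_eq[OF i] by simp
    ultimately show "w \<in> {0..<1} \<and> iet_T n a \<tau> w = iet_T n a \<tau> z + (w - z)" by simp
  qed
  moreover have "b i - z > 0" using i by simp
  ultimately show "\<exists>\<delta>>0. \<forall>w. near True z \<delta> w \<longrightarrow> w \<in> {0..<1} \<and> iet_T n a \<tau> w = iet_T n a \<tau> z + (w - z)"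
    by blast
qed

lemma Tt_LT: "LT False {0<..1} (iet_Tt n a \<tau>)"
  unfolding LT_def
proof
  fix z :: real assume z: "z \<in> {0<..1}"
  obtain i where i: "i \<in> {1..n}" "b (i - 1) < z" "z \<le> b i" using A.ex_L[of z] z by auto
  have "\<forall>w. near False z (z - b (i - 1)) w \<longrightarrow> w \<in> {0<..1} \<and> iet_Tt n a \<tau> w = iet_Tt n a \<tau> z + (w - z)"
  proof (intro allI impI)
    fix w assume w: "near False z (z - b (i - 1)) w"
    then have wi: "b (i - 1) < w" "w \<le> b i" using i by (auto simp: near_def)
    have "0 \<le> b (i - 1)" using i(1) by (intro A.nonneg) auto
    then have "w \<in> {0<..1}" using w z wi by (auto simp: near_def)
    moreover have "iet_Tt n a \<tau> w = iet_Tt n a \<tau> z + (w - z)"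
      using Tt_eq[OF i(1) wi] Tt_eq[OF i] by simp
    ultimately show "w \<in> {0<..1} \<and> iet_Tt n a \<tau> w = iet_Tt n a \<tau> z + (w - z)" by simp
  qed
  moreover have "z - b (i - 1) > 0" using i by simp
  ultimately show "\<exists>\<delta>>0. \<forall>w. near False z \<delta> w \<longrightarrow> w \<in> {0<..1} \<and> iet_Tt n a \<tau> w = iet_Tt n a \<tau> z + (w - z)"
    by blast
qed

end



lemma ival_R: fixes p q z :: real
  shows "\<exists>\<delta>>0. \<forall>v. near True z \<delta> v \<longrightarrow> (v \<in> {p..<q} \<longleftrightarrow> z \<in> {p..<q})"
proof (cases "z < p")
  case True
  then show ?thesis by (intro exI[of _ "p - z"]) (auto simp: near_def)
next
  case False
  show ?thesis
  proof (cases "z < q")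
    case True
    then show ?thesis using False by (intro exI[of _ "q - z"]) (auto simp: near_def)
  next
    case False
    then show ?thesis by (intro exI[of _ 1]) (auto simp: near_def)
  qed
qed

lemma ival_L: fixes p q z :: real
  shows "\<exists>\<delta>>0. \<forall>v. near False z \<delta> v \<longrightarrow> (v \<in> {p<..q} \<longleftrightarrow> z \<in> {p<..q})"
proof (cases "z \<le> p")
  case True
  then show ?thesis by (intro exI[of _ 1]) (auto simp: near_def)
next
  case False
  show ?thesis
  proof (cases "z \<le> q")
    case True
    then show ?thesis using False by (intro exI[of _ "z - p"]) (auto simp: near_def)
  next
    case False
    then show ?thesis by (intro exI[of _ "z - q"]) (auto simp: near_def)
  qed
qed

lemma itin_const:
  assumes b: "bij_betw f S S" and L: "LT d S f" and x: "x \<in> S"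
    and J: "\<And>z. z \<in> S \<Longrightarrow> \<exists>\<delta>>0. \<forall>v. near d z \<delta> v \<longrightarrow> (\<forall>i\<in>I. v \<in> J i \<longleftrightarrow> z \<in> J i)"
    and KK: "finite KK"
  shows "\<exists>\<delta>>0. \<forall>w. near d x \<delta> w \<longrightarrow>
     (\<forall>k\<in>KK. (THE i. i \<in> I \<and> zpow S f k w \<in> J i) = (THE i. i \<in> I \<and> zpow S f k x \<in> J i))"
proof (rule near_finite[OF KK])
  fix k assume "k \<in> KK"
  define z where "z = zpow S f k x"
  have z: "z \<in> S" using zpow_in[OF b x] z_def by simp
  obtain \<delta>1 where d1: "\<delta>1 > 0" "\<forall>w. near d x \<delta>1 w \<longrightarrow> w \<in> S \<and> zpow S f k w = zpow S f k x + (w - x)"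
    using LT_zpow[OF b L, of k] x unfolding LT_def by blast
  obtain \<delta>2 where d2: "\<delta>2 > 0" "\<forall>v. near d z \<delta>2 v \<longrightarrow> (\<forall>i\<in>I. v \<in> J i \<longleftrightarrow> z \<in> J i)"
    using J[OF z] by blast
  have "\<forall>w. near d x (min \<delta>1 \<delta>2) w \<longrightarrow> (THE i. i \<in> I \<and> zpow S f k w \<in> J i) = (THE i. i \<in> I \<and> zpow S f k x \<in> J i)"
  proof (intro allI impI)
    fix w assume w: "near d x (min \<delta>1 \<delta>2) w"
    then have w1: "near d x \<delta>1 w" and w2: "near d x \<delta>2 w" using near_mono by fastforce+
    have e: "zpow S f k w = z + (w - x)" using d1(2) w1 z_def by simp
    have "near d z \<delta>2 (z + (w - x))" using w2 by (simp add: near_shift')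
    then have "\<forall>i\<in>I. zpow S f k w \<in> J i \<longleftrightarrow> z \<in> J i" using d2(2) e by simp
    then have "(\<lambda>i. i \<in> I \<and> zpow S f k w \<in> J i) = (\<lambda>i. i \<in> I \<and> zpow S f k x \<in> J i)"
      using z_def by auto
    then show "(THE i. i \<in> I \<and> zpow S f k w \<in> J i) = (THE i. i \<in> I \<and> zpow S f k x \<in> J i)"
      by simp
  qed
  then show "\<exists>\<delta>>0. \<forall>w. near d x \<delta> w \<longrightarrow> (THE i. i \<in> I \<and> zpow S f k w \<in> J i) = (THE i. i \<in> I \<and> zpow S f k x \<in> J i)"
    using d1(1) d2(1) by (metis min_less_iff_conj)
qed

context iet begin

lemma itin_right:
  assumes x: "x \<in> {0..<1}"
  shows "\<exists>\<delta>>0. \<forall>w. near True x \<delta> w \<longrightarrow> (\<forall>k\<in>{-K..K}. iet_itin n a \<tau> w k = iet_itin n a \<tau> x k)"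
proof -
  have J: "\<exists>\<delta>>0. \<forall>v. near True z \<delta> v \<longrightarrow> (\<forall>i\<in>{1..n}. v \<in> iet_J a i \<longleftrightarrow> z \<in> iet_J a i)" for z
    unfolding iet_J_def by (rule near_finite) (simp, rule ival_R)
  show ?thesis
    using itin_const[OF T_bij T_LT x J, of "{-K..K}"]
    unfolding iet_itin_def iet_Tpow_def by simp
qed

lemma itint_left:
  assumes x: "x \<in> {0<..1}"
  shows "\<exists>\<delta>>0. \<forall>w. near False x \<delta> w \<longrightarrow> (\<forall>k\<in>{-K..K}. iet_itint n a \<tau> w k = iet_itint n a \<tau> x k)"
proof -
  have J: "\<exists>\<delta>>0. \<forall>v. near False z \<delta> v \<longrightarrow> (\<forall>i\<in>{1..n}. v \<in> iet_Jt a i \<longleftrightarrow> z \<in> iet_Jt a i)" for z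
    unfolding iet_Jt_def by (rule near_finite) (simp, rule ival_L)
  show ?thesis
    using itin_const[OF Tt_bij Tt_LT x J, of "{-K..K}"]
    unfolding iet_itint_def iet_Ttpow_def by simp
qed

end



lemma avoid_countable:
  fixes p q :: real assumes "countable C" "p < q"
  shows "\<exists>y. p < y \<and> y < q \<and> y \<notin> C"
proof (rule ccontr)
  assume "\<not> ?thesis"
  then have "{p<..<q} \<subseteq> C" by auto
  then have "countable {p<..<q}" using assms(1) countable_subset by blast
  then show False using uncountable_open_interval assms(2) by blast
qed

sublocale iet \<subseteq> A: part n a by (rule partA)
sublocale iet \<subseteq> C: part n ct by (rule partC)

context iet begin

abbreviation "T \<equiv> iet_T n a \<tau>"
abbreviation "Tt \<equiv> iet_Tt n a \<tau>"

lemma Dinf_countable: "countable (iet_Dinf n a \<tau>)"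
  unfolding iet_Dinf_def iet_D_def by (intro countable_Un countable_UN) auto

lemma R_sub: "iet_R n a \<tau> \<subseteq> {0<..<1}"
  unfolding iet_R_def iet_Dinf_def by auto

lemma dense_right: assumes "x \<in> {0..<1}" "\<delta> > 0"
  shows "\<exists>y\<in>iet_R n a \<tau>. near True x \<delta> y"
proof -
  obtain y where y: "x < y" "y < min (x + \<delta>) 1" "y \<notin> iet_Dinf n a \<tau>"
    using avoid_countable[OF Dinf_countable, of x "min (x + \<delta>) 1"] assms by auto
  then have "y \<in> iet_R n a \<tau>" using assms unfolding iet_R_def by auto
  then show ?thesis using y by (intro bexI[of _ y]) (auto simp: near_def)
qed

lemma dense_left: assumes "x \<in> {0<..1}" "\<delta> > 0"
  shows "\<exists>y\<in>iet_R n a \<tau>. near False x \<delta> y"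
proof -
  obtain y where y: "max (x - \<delta>) 0 < y" "y < x" "y \<notin> iet_Dinf n a \<tau>"
    using avoid_countable[OF Dinf_countable, of "max (x - \<delta>) 0" x] assms by auto
  then have "y \<in> iet_R n a \<tau>" using assms unfolding iet_R_def by auto
  then show ?thesis using y by (intro bexI[of _ y]) (auto simp: near_def)
qed

definition Q where "Q z \<longleftrightarrow> 0 < z \<and> z < 1 \<and> (\<forall>j\<in>{1..n-1}. z \<noteq> b j)"

lemma Q_J: assumes "Q z" "i \<in> {1..n}" shows "z \<in> iet_J a i \<longleftrightarrow> z \<in> iet_Jt a i"
proof -
  have z: "0 < z" "z < 1" "\<And>j. j \<in> {1..n-1} \<Longrightarrow> z \<noteq> b j" using assms(1) by (auto simp: Q_def)
  have "z \<noteq> b (i - 1)"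
  proof (cases "i = 1")
    case True then show ?thesis using z(1) b_0[of a] by simp
  next
    case False
    then have "i - 1 \<in> {1..n-1}" using assms(2) by auto
    then show ?thesis using z(3)[of "i - 1"] by auto
  qed
  moreover have "z \<noteq> b i"
  proof (cases "i = n")
    case True then show ?thesis using z(2) A.tot by simp
  next
    case False
    then have "i \<in> {1..n-1}" using assms(2) by auto
    then show ?thesis using z(3)[of i] by auto
  qed
  ultimately show ?thesis unfolding iet_J_def iet_Jt_def by auto
qed

lemma Q_T: assumes "Q z" shows "T z = Tt z"
proof -
  have z: "0 \<le> z" "z < 1" using assms by (auto simp: Q_def)
  obtain i where i: "i \<in> {1..n}" "b (i - 1) \<le> z" "z < b i" using A.ex_R[of z] z by auto
  then have "z \<in> iet_Jt a i" using Q_J[OF assms i(1)] by (simp add: iet_J_def)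
  then have "b (i - 1) < z" "z \<le> b i" by (auto simp: iet_Jt_def)
  then show ?thesis using T_eq[OF i] Tt_eq[OF i(1)] by simp
qed

lemma zero_in_orbit:
  "T 0 = 0 \<or> (\<exists>d\<in>iet_D n a. T d = 0)"
proof (cases "\<tau> 1 = 1")
  case True
  have n1: "1 \<in> {1..n}" using asum by (cases "n = 0") auto
  have "b 0 \<le> 0" "0 < b 1" using b_0[of a] A.strict[of 0 1] n1 by auto
  then have "T 0 = 0 - b 0 + bt (\<tau> 1 - 1)" using T_eq[OF n1] by simp
  then show ?thesis using True b_0 by simp
next
  case False
  have n1: "1 \<in> {1..n}" using asum by (cases "n = 0") auto
  define j where "j = inv_into {1..n} \<tau> 1"
  have j: "j \<in> {1..n}" "\<tau> j = 1" using invtau_in[OF n1] tau_invtau[OF n1] j_def by auto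
  have "j \<noteq> 1" using j False by auto
  then have j1: "j - 1 \<in> {1..n-1}" using j by auto
  have "b (j - 1) < b j" using A.strict[of "j - 1" j] j by auto
  then have "T (b (j - 1)) = bt 0" using T_eq[OF j(1), of "b (j - 1)"] j(2) by simp
  moreover have "b (j - 1) \<in> iet_D n a" using j1 unfolding iet_D_def by auto
  ultimately show ?thesis using b_0 by metis
qed

lemma Tpow_in: "x \<in> {0..<1} \<Longrightarrow> iet_Tpow n a \<tau> k x \<in> {0..<1}"
  unfolding iet_Tpow_def by (rule zpow_in[OF T_bij])

lemma R_Q: assumes y: "y \<in> iet_R n a \<tau>" shows "Q (iet_Tpow n a \<tau> k y)"
proof -
  let ?S = "{0..<1::real}"
  have yS: "y \<in> ?S" using R_sub y by auto
  have ynot: "y \<notin> iet_Dinf n a \<tau>" using y unfolding iet_R_def by auto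
  define z where "z = iet_Tpow n a \<tau> k y"
  have zS: "z \<in> ?S" using Tpow_in[OF yS] z_def by simp
  have bk: "iet_Tpow n a \<tau> (-k) z = y"
    using zpow_add[OF T_bij yS, of "-k" k] zpow_0 unfolding z_def iet_Tpow_def by simp
  have nD: "z \<notin> iet_D n a"
  proof
    assume "z \<in> iet_D n a"
    then have "y \<in> iet_Tpow n a \<tau> (-k) ` iet_D n a" using bk by (metis image_eqI)
    then show False using ynot unfolding iet_Dinf_def by blast
  qed
  have nz: "z \<noteq> 0"
  proof
    assume z0: "z = 0"
    from zero_in_orbit show False
    proof
      assume T0: "T 0 = 0"
      have "zpow ?S T m 0 = 0" for m
      proof (induction m rule: int_induct[where k=0])
        case base then show ?case by (simp add: zpow_0)
      next
        case (step1 i) then show ?case using zpow_succ[OF T_bij, of 0 i] T0 by simp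
      next
        case (step2 i)
        have "zpow ?S T (i - 1) 0 = inv_into ?S T 0" using zpow_pred[OF T_bij, of 0 i] step2(2) by simp
        also have "\<dots> = 0" using bij_inv_f[OF T_bij, of 0] T0 by simp
        finally show ?case .
      qed
      then have "y = 0" using bk z0 unfolding iet_Tpow_def by simp
      then show False using ynot unfolding iet_Dinf_def by simp
    next
      assume "\<exists>d\<in>iet_D n a. T d = 0"
      then obtain d where d: "d \<in> iet_D n a" "T d = 0" by blast
      have dS: "d \<in> ?S" using d(1) A.nonneg A.strict[of _ n] A.tot unfolding iet_D_def by force
      have "zpow ?S T 1 d = 0" using zpow_succ[OF T_bij dS, of 0] zpow_0 d(2) by simp
      then have "y = zpow ?S T (-k) (zpow ?S T 1 d)" using bk z0 unfolding iet_Tpow_def by simp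
      also have "\<dots> = iet_Tpow n a \<tau> (-k + 1) d" using zpow_add[OF T_bij dS] unfolding iet_Tpow_def by simp
      finally have "y \<in> iet_Tpow n a \<tau> (-k + 1) ` iet_D n a" using d(1) by blast
      then show False using ynot unfolding iet_Dinf_def by blast
    qed
  qed
  show ?thesis unfolding Q_def z_def[symmetric] using zS nz nD unfolding iet_D_def by auto
qed

lemma R_pow_eq: assumes y: "y \<in> iet_R n a \<tau>" shows "iet_Tpow n a \<tau> k y = iet_Ttpow n a \<tau> k y"
proof -
  let ?S = "{0..<1::real}" and ?S' = "{0<..1::real}"
  have yS: "y \<in> ?S" "y \<in> ?S'" using R_sub y by auto
  show ?thesis
  proof (induction k rule: int_induct[where k=0])
    case base then show ?case by (simp add: iet_Tpow_def iet_Ttpow_def zpow_0)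
  next
    case (step1 i)
    have "iet_Tpow n a \<tau> (i + 1) y = T (iet_Tpow n a \<tau> i y)"
      using zpow_succ[OF T_bij yS(1)] unfolding iet_Tpow_def by simp
    also have "\<dots> = Tt (iet_Tpow n a \<tau> i y)" using Q_T[OF R_Q[OF y]] .
    also have "\<dots> = iet_Ttpow n a \<tau> (i + 1) y"
      using zpow_succ[OF Tt_bij yS(2)] step1(2) unfolding iet_Ttpow_def by simp
    finally show ?case .
  next
    case (step2 i)
    define u where "u = iet_Tpow n a \<tau> (i - 1) y"
    have Qu: "Q u" using R_Q[OF y] u_def by simp
    then have uS': "u \<in> ?S'" by (auto simp: Q_def)
    have "iet_Tpow n a \<tau> i y = T u"
      using zpow_succ[OF T_bij yS(1), of "i - 1"] unfolding iet_Tpow_def u_def by simp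
    then have "iet_Ttpow n a \<tau> i y = Tt u" using step2(2) Q_T[OF Qu] by simp
    then have "iet_Ttpow n a \<tau> (i - 1) y = inv_into ?S' Tt (Tt u)"
      using zpow_pred[OF Tt_bij yS(2), of i] unfolding iet_Ttpow_def by simp
    also have "\<dots> = u" using bij_inv_f[OF Tt_bij uS'] .
    finally show ?case using u_def by simp
  qed
qed

lemma R_itin_eq: assumes y: "y \<in> iet_R n a \<tau>" shows "iet_itin n a \<tau> y = iet_itint n a \<tau> y"
proof
  fix k
  define z where "z = iet_Tpow n a \<tau> k y"
  have Qz: "Q z" using R_Q[OF y] z_def by simp
  have "(\<lambda>i. i \<in> {1..n} \<and> z \<in> iet_J a i) = (\<lambda>i. i \<in> {1..n} \<and> z \<in> iet_Jt a i)"
    using Q_J[OF Qz] by auto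
  then show "iet_itin n a \<tau> y k = iet_itint n a \<tau> y k"
    unfolding iet_itin_def iet_itint_def R_pow_eq[OF y, symmetric] z_def by simp
qed

end



lemma closure_char:
  fixes \<omega> :: "int \<Rightarrow> nat" and A :: "(int \<Rightarrow> nat) set"
  shows "\<omega> \<in> closure A \<longleftrightarrow> (\<forall>K::nat. \<exists>s\<in>A. \<forall>k\<in>{-int K..int K}. s k = \<omega> k)"
proof
  assume c: "\<omega> \<in> closure A"
  show "\<forall>K::nat. \<exists>s\<in>A. \<forall>k\<in>{-int K..int K}. s k = \<omega> k"
  proof
    fix K :: nat
    define U where "U = {f :: int \<Rightarrow> nat. \<forall>i\<in>{-int K..int K}. f (id i) \<in> {\<omega> i}}"
    have "open U" unfolding U_def by (rule product_topology_basis') (auto intro: open_discrete)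
    moreover have "\<omega> \<in> U" unfolding U_def by simp
    ultimately have "A \<inter> U \<noteq> {}" using c unfolding closure_iff_nhds_not_empty by blast
    then show "\<exists>s\<in>A. \<forall>k\<in>{-int K..int K}. s k = \<omega> k" unfolding U_def by auto
  qed
next
  assume H: "\<forall>K::nat. \<exists>s\<in>A. \<forall>k\<in>{-int K..int K}. s k = \<omega> k"
  show "\<omega> \<in> closure A"
    unfolding closure_iff_nhds_not_empty
  proof (intro allI impI)
    fix B S :: "(int \<Rightarrow> nat) set"
    assume SB: "S \<subseteq> B" and oS: "open S" and wS: "\<omega> \<in> S"
    have "openin (product_topology (\<lambda>i. euclidean) UNIV) S" using oS by (simp add: open_fun_def)
    then obtain X where X: "\<omega> \<in> (\<Pi>\<^sub>E i\<in>UNIV. X i)" "finite {i. X i \<noteq> topspace (euclidean :: nat topology)}"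
      "(\<Pi>\<^sub>E i\<in>UNIV. X i) \<subseteq> S"
      using product_topology_open_contains_basis[of "\<lambda>i. euclidean" UNIV S \<omega>] wS by blast
    define F where "F = {i. X i \<noteq> UNIV}"
    have fF: "finite F" using X(2) unfolding F_def by simp
    define K where "K = nat (\<Sum>i\<in>F. \<bar>i\<bar>)"
    obtain s where s: "s \<in> A" "\<forall>k\<in>{-int K..int K}. s k = \<omega> k" using H by blast
    have "s \<in> (\<Pi>\<^sub>E i\<in>UNIV. X i)"
      unfolding PiE_UNIV_domain
    proof
      fix i :: int
      show "s i \<in> X i"
      proof (cases "i \<in> F")
        case True
        have "\<bar>i\<bar> \<le> (\<Sum>i\<in>F. \<bar>i\<bar>)" using member_le_sum[OF True _ fF, of abs] by simp
        then have "i \<in> {-int K..int K}" unfolding K_def by auto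
        then have "s i = \<omega> i" using s(2) by blast
        moreover have "\<omega> i \<in> X i" using X(1) by (auto simp: PiE_UNIV_domain)
        ultimately show ?thesis by simp
      next
        case False then show ?thesis unfolding F_def by simp
      qed
    qed
    then have "s \<in> B" using X(3) SB by blast
    then show "A \<inter> B \<noteq> {}" using s(1) by blast
  qed
qed

context iet begin

lemma X_super1: assumes x: "x \<in> {0..<1}" shows "iet_itin n a \<tau> x \<in> iet_X n a \<tau>"
  unfolding iet_X_def closure_char
proof
  fix K :: nat
  obtain \<delta> where d: "\<delta> > 0" "\<forall>w. near True x \<delta> w \<longrightarrow> (\<forall>k\<in>{-int K..int K}. iet_itin n a \<tau> w k = iet_itin n a \<tau> x k)"
    using itin_right[OF x, of "int K"] by blast
  obtain y where y: "y \<in> iet_R n a \<tau>" "near True x \<delta> y" using dense_right[OF x d(1)] by blast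
  show "\<exists>s\<in>iet_itin n a \<tau> ` iet_R n a \<tau>. \<forall>k\<in>{-int K..int K}. s k = iet_itin n a \<tau> x k"
    using y d(2) by blast
qed

lemma X_super2: assumes x: "x \<in> {0<..1}" shows "iet_itint n a \<tau> x \<in> iet_X n a \<tau>"
  unfolding iet_X_def closure_char
proof
  fix K :: nat
  obtain \<delta> where d: "\<delta> > 0" "\<forall>w. near False x \<delta> w \<longrightarrow> (\<forall>k\<in>{-int K..int K}. iet_itint n a \<tau> w k = iet_itint n a \<tau> x k)"
    using itint_left[OF x, of "int K"] by blast
  obtain y where y: "y \<in> iet_R n a \<tau>" "near False x \<delta> y" using dense_left[OF x d(1)] by blast
  have "iet_itin n a \<tau> y = iet_itint n a \<tau> y" using R_itin_eq[OF y(1)] .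
  then show "\<exists>s\<in>iet_itin n a \<tau> ` iet_R n a \<tau>. \<forall>k\<in>{-int K..int K}. s k = iet_itint n a \<tau> x k"
    using y d(2) by (metis image_eqI)
qed

lemma X_sub: assumes w: "\<omega> \<in> iet_X n a \<tau>"
  shows "\<omega> \<in> iet_itin n a \<tau> ` {0..<1} \<union> iet_itint n a \<tau> ` {0<..1}"
proof -
  have "\<forall>m::nat. \<exists>y. y \<in> iet_R n a \<tau> \<and> (\<forall>k\<in>{-int m..int m}. iet_itin n a \<tau> y k = \<omega> k)"
    using w unfolding iet_X_def closure_char by blast
  then obtain y where y: "\<And>m. y m \<in> iet_R n a \<tau>" "\<And>m. \<forall>k\<in>{-int m..int m}. iet_itin n a \<tau> (y m) k = \<omega> k"
    by metis
  obtain r where r: "strict_mono r" "monoseq (\<lambda>m. y (r m))" using seq_monosub by blast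
  define z where "z = (\<lambda>m. y (r m))"
  have zR: "z m \<in> iet_R n a \<tau>" for m using y(1) z_def by simp
  have z01: "0 < z m" "z m < 1" for m using zR[of m] R_sub by auto
  have zagree: "iet_itin n a \<tau> (z m) k = \<omega> k" if "\<bar>k\<bar> \<le> int m" for m k
  proof -
    have "m \<le> r m" using seq_suble[OF r(1)] .
    then have "k \<in> {-int (r m)..int (r m)}" using that by auto
    then show ?thesis using y(2)[of "r m"] z_def by simp
  qed
  have "Bseq z" by (rule BseqI'[of _ 1]) (use z01 in \<open>auto simp: less_imp_le\<close>)
  moreover have "monoseq z" using r(2) z_def by simp
  ultimately have "convergent z" by (rule Bseq_monoseq_convergent)
  then obtain x where x: "z \<longlonglongrightarrow> x" using convergent_def by blast
  have x01: "0 \<le> x" "x \<le> 1"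
    using LIMSEQ_le_const[OF x, of 0] LIMSEQ_le_const2[OF x, of 1] z01 less_imp_le by blast+
  have close: "\<exists>N. \<forall>m\<ge>N. \<bar>z m - x\<bar> < \<delta>" if "\<delta> > 0" for \<delta>
    using x that unfolding LIMSEQ_iff by simp
  have "incseq z \<or> decseq z" using r(2) unfolding monoseq_iff z_def by simp
  then show ?thesis
  proof
    assume inc: "incseq z"
    have le: "z m \<le> x" for m using incseq_le[OF inc x] .
    have xin: "x \<in> {0<..1}" using le[of 0] z01[of 0] x01 by auto
    have "\<omega> = iet_itint n a \<tau> x"
    proof
      fix k
      obtain \<delta> where d: "\<delta> > 0" "\<forall>w. near False x \<delta> w \<longrightarrow> (\<forall>k'\<in>{-\<bar>k\<bar>..\<bar>k\<bar>}. iet_itint n a \<tau> w k' = iet_itint n a \<tau> x k')"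
        using itint_left[OF xin, of "\<bar>k\<bar>"] by blast
      obtain N where N: "\<forall>m\<ge>N. \<bar>z m - x\<bar> < \<delta>" using close[OF d(1)] by blast
      define m where "m = max N (nat \<bar>k\<bar>)"
      have "\<bar>z m - x\<bar> < \<delta>" using N m_def by simp
      then have "near False x \<delta> (z m)" using le[of m] by (auto simp: near_def)
      moreover have "k \<in> {-\<bar>k\<bar>..\<bar>k\<bar>}" by (simp add: abs_if)
      ultimately have "iet_itint n a \<tau> (z m) k = iet_itint n a \<tau> x k" using d(2) by blast
      moreover have "iet_itin n a \<tau> (z m) = iet_itint n a \<tau> (z m)" using R_itin_eq[OF zR] .
      moreover have "iet_itin n a \<tau> (z m) k = \<omega> k" using zagree[of k m] m_def by simp
      ultimately show "\<omega> k = iet_itint n a \<tau> x k" by simp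
    qed
    then show ?thesis using xin by blast
  next
    assume dec: "decseq z"
    have ge: "x \<le> z m" for m using decseq_ge[OF dec x] .
    have xin: "x \<in> {0..<1}" using ge[of 0] z01[of 0] x01 by auto
    have "\<omega> = iet_itin n a \<tau> x"
    proof
      fix k
      obtain \<delta> where d: "\<delta> > 0" "\<forall>w. near True x \<delta> w \<longrightarrow> (\<forall>k'\<in>{-\<bar>k\<bar>..\<bar>k\<bar>}. iet_itin n a \<tau> w k' = iet_itin n a \<tau> x k')"
        using itin_right[OF xin, of "\<bar>k\<bar>"] by blast
      obtain N where N: "\<forall>m\<ge>N. \<bar>z m - x\<bar> < \<delta>" using close[OF d(1)] by blast
      define m where "m = max N (nat \<bar>k\<bar>)"
      have "\<bar>z m - x\<bar> < \<delta>" using N m_def by simp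
      then have "near True x \<delta> (z m)" using ge[of m] by (auto simp: near_def)
      moreover have "k \<in> {-\<bar>k\<bar>..\<bar>k\<bar>}" by (simp add: abs_if)
      ultimately have "iet_itin n a \<tau> (z m) k = iet_itin n a \<tau> x k" using d(2) by blast
      moreover have "iet_itin n a \<tau> (z m) k = \<omega> k" using zagree[of k m] m_def by simp
      ultimately show "\<omega> k = iet_itin n a \<tau> x k" by simp
    qed
    then show ?thesis using xin by blast
  qed
qed

lemma main: "iet_X n a \<tau> = iet_itin n a \<tau> ` {0..<1} \<union> iet_itint n a \<tau> ` {0<..1}"
  using X_sub X_super1 X_super2 by blast

end

theorem theorem4p2:
  fixes n :: nat and a :: "nat \<Rightarrow> real" and \<tau> :: "nat \<Rightarrow> nat"
  assumes "n \<ge> 2"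
    and "\<And>i. i \<in> {1..n} \<Longrightarrow> a i > 0"
    and "(\<Sum>i\<in>{1..n}. a i) = 1"
    and "\<tau> permutes {1..n}"
  shows "iet_X n a \<tau> = iet_itin n a \<tau> ` {0..<1} \<union> iet_itint n a \<tau> ` {0<..1}"
proof -
  interpret iet n a \<tau> using assms(2-4) by unfold_locales auto
  show ?thesis by (rule main)
qed


end
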